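(* If $G$ is a simple graph of order $n\geq 3$ with minimum degree $\delta(G)\geq \frac{n}{2}$, then $px_k(G)=2$ for each integer $k$ with $3\leq k\leq n$.
   Context: All graphs are finite, simple, undirected and connected. An edge-coloring of a graph assigns a color to each edge (adjacent edges may receive the same color). A tree in an edge-colored graph is proper if any two adjacent edges of the tree receive different colors. For $S\subseteq V(G)$, an $S$-tree is a subgraph of $G$ that is a tree containing all vertices of $S$. For a connected graph $G$ of order $n$ and an integer $k$ with $2\le k\le n$, an edge-coloring of $G$ is a $k$-proper coloring if for every set $S$ of $k$ vertices of $G$ there exists a proper $S$-tree in $G$. The $k$-proper index $px_k(G)$ is the minimum number of colors used in a $k$-proper coloring of $G$. *)

theory Defs
  imports Main
begin

definition simple_graph :: "'a set \<Rightarrow> 'a set set \<Rightarrow> bool" where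
  "simple_graph V E \<longleftrightarrow> finite V \<and> (\<forall>e\<in>E. e \<subseteq> V \<and> card e = 2)"

definition degree :: "'a set set \<Rightarrow> 'a \<Rightarrow> nat" where
  "degree E v = card {e\<in>E. v \<in> e}"

definition adj_rel :: "'a set set \<Rightarrow> ('a \<times> 'a) set" where
  "adj_rel T = {(x, y). {x, y} \<in> T}"

definition connected_on :: "'a set \<Rightarrow> 'a set set \<Rightarrow> bool" where
  "connected_on W T \<longleftrightarrow> (\<forall>x\<in>W. \<forall>y\<in>W. (x, y) \<in> (adj_rel T)\<^sup>*)"

text \<open>A tree with vertex set W and edge set T: nonempty, connected, acyclic
  (acyclic = no edge lies on a cycle, i.e. removing any edge separates its endpoints).\<close>
definition is_tree :: "'a set \<Rightarrow> 'a set set \<Rightarrow> bool" where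
  "is_tree W T \<longleftrightarrow> finite W \<and> W \<noteq> {} \<and> (\<forall>e\<in>T. e \<subseteq> W \<and> card e = 2)
     \<and> connected_on W T
     \<and> (\<forall>e\<in>T. \<forall>x y. e = {x, y} \<longrightarrow> (x, y) \<notin> (adj_rel (T - {e}))\<^sup>*)"

definition proper_edges :: "('a set \<Rightarrow> 'c) \<Rightarrow> 'a set set \<Rightarrow> bool" where
  "proper_edges c T \<longleftrightarrow> (\<forall>e\<in>T. \<forall>f\<in>T. e \<noteq> f \<and> e \<inter> f \<noteq> {} \<longrightarrow> c e \<noteq> c f)"

definition k_proper_coloring :: "'a set \<Rightarrow> 'a set set \<Rightarrow> nat \<Rightarrow> ('a set \<Rightarrow> nat) \<Rightarrow> bool" where
  "k_proper_coloring V E k c \<longleftrightarrow>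
     (\<forall>S. S \<subseteq> V \<and> card S = k \<longrightarrow>
        (\<exists>W T. W \<subseteq> V \<and> T \<subseteq> E \<and> is_tree W T \<and> S \<subseteq> W \<and> proper_edges c T))"

definition px :: "'a set \<Rightarrow> 'a set set \<Rightarrow> nat \<Rightarrow> nat" where
  "px V E k = (LEAST m. \<exists>c. k_proper_coloring V E k c \<and> card (c ` E) = m)"

end

theory Submission imports Defs begin

definition nbr :: "'a set set \<Rightarrow> 'a \<Rightarrow> 'a set" where
  "nbr E v = {u. {v,u} \<in> E}"

lemma degree_nbr:
  assumes "simple_graph V E"
  shows "degree E v = card (nbr E v)"
proof -
  have eq: "{e\<in>E. v \<in> e} = (\<lambda>u. {v,u}) ` nbr E v"
  proof
    show "{e\<in>E. v \<in> e} \<subseteq> (\<lambda>u. {v,u}) ` nbr E v"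
    proof
      fix e assume e: "e \<in> {e\<in>E. v \<in> e}"
      then have "card e = 2" using assms unfolding simple_graph_def by auto
      then obtain x y where xy: "e = {x,y}" "x \<noteq> y" by (auto simp: card_2_iff)
      then have "e = {v, x} \<or> e = {v, y}" using e by auto
      then show "e \<in> (\<lambda>u. {v,u}) ` nbr E v" using e unfolding nbr_def by auto
    qed
  qed (auto simp: nbr_def)
  have ne: "\<And>u. u \<in> nbr E v \<Longrightarrow> u \<noteq> v"
  proof -
    fix u assume "u \<in> nbr E v"
    then have "card {v,u} = 2" using assms unfolding simple_graph_def nbr_def by auto
    then show "u \<noteq> v" by (auto simp: card_2_iff)
  qed
  have "inj_on (\<lambda>u. {v,u}) (nbr E v)"
    using ne by (auto simp: inj_on_def doubleton_eq_iff)
  then show ?thesis unfolding degree_def eq by (simp add: card_image)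
qed

lemma matching_rtrancl:
  assumes two: "\<forall>e\<in>T. card e = 2"
    and disj: "\<forall>e\<in>T. \<forall>f\<in>T. e \<noteq> f \<longrightarrow> e \<inter> f = {}"
    and "(x, y) \<in> (adj_rel T)\<^sup>*"
  shows "x = y \<or> {x, y} \<in> T"
  using assms(3)
proof (induction rule: rtrancl_induct)
  case base then show ?case by simp
next
  case (step y z)
  then have yz: "{y,z} \<in> T" by (simp add: adj_rel_def)
  have "card {y,z} = 2" using two yz by blast
  then have "y \<noteq> z" by (cases "y = z") auto
  show ?case
  proof (cases "x = y")
    case True then show ?thesis using yz by simp
  next
    case False
    then have xy: "{x,y} \<in> T" using step by simp
    have "{x,y} = {y,z}"
    proof (rule ccontr)
      assume "{x,y} \<noteq> {y,z}"
      then have "{x,y} \<inter> {y,z} = {}" using disj xy yz by meson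
      then show False by simp
    qed
    then have "x = z" using \<open>y \<noteq> z\<close> by (auto simp: doubleton_eq_iff)
    then show ?thesis by simp
  qed
qed

lemma no_small_tree:
  assumes tree: "is_tree W T" and "card W \<ge> 3"
    and single: "\<forall>e\<in>T. \<forall>f\<in>T. e \<noteq> f \<longrightarrow> e \<inter> f = {}"
  shows False
proof -
  have two: "\<forall>e\<in>T. card e = 2" and conn: "connected_on W T"
    using tree unfolding is_tree_def by auto
  obtain S where S: "S \<subseteq> W" "card S = 3" using assms(2) obtain_subset_with_card_n by metis
  then obtain a b c where abc: "S = {a,b,c}" "a \<noteq> b" "a \<noteq> c" "b \<noteq> c" by (auto simp: card_3_iff)
  have inW: "a \<in> W" "b \<in> W" "c \<in> W" using abc S by auto
  have "(a,b) \<in> (adj_rel T)\<^sup>*" "(a,c) \<in> (adj_rel T)\<^sup>*"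
    using conn inW unfolding connected_on_def by auto
  then have "{a,b} \<in> T" "{a,c} \<in> T"
    using matching_rtrancl[OF two single] abc by auto
  moreover have "{a,b} \<noteq> {a,c}" using abc by (auto simp: doubleton_eq_iff)
  ultimately have "{a,b} \<inter> {a,c} = {}" using single by meson
  then show False by simp
qed

definition gp :: "'a set set \<Rightarrow> 'a list \<Rightarrow> bool" where
  "gp E p \<longleftrightarrow> distinct p \<and> successively (\<lambda>x y. {x,y} \<in> E) p"

lemma ham_path:
  assumes sg: "simple_graph V E" and n3: "card V \<ge> 3"
    and deg: "\<forall>v\<in>V. 2 * card (nbr E v) \<ge> card V"
  shows "\<exists>p. gp E p \<and> set p = V"
proof -
  define n where "n = card V"
  have finV: "finite V" using sg simple_graph_def by blast
  have edgeV: "\<And>x y. {x,y}\<in>E \<Longrightarrow> x\<in>V \<and> y\<in>V" using sg unfolding simple_graph_def by blast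
  have edgene: "\<And>x y. {x,y}\<in>E \<Longrightarrow> x\<noteq>y"
  proof -
    fix x y assume "{x,y}\<in>E"
    then have "card {x,y} = 2" using sg unfolding simple_graph_def by blast
    then show "x \<noteq> y" by (cases "x = y") auto
  qed
  have symE: "(\<lambda>x y. {y,x} \<in> E) = (\<lambda>x y. {x,y} \<in> E)" by (auto simp: fun_eq_iff insert_commute)
  have nbrV: "\<And>v. nbr E v \<subseteq> V" using edgeV unfolding nbr_def by blast
  define P where "P = {p. gp E p \<and> set p \<subseteq> V}"
  have "P \<subseteq> {xs. set xs \<subseteq> V \<and> length xs \<le> n}"
  proof
    fix p assume "p \<in> P"
    then have "distinct p" "set p \<subseteq> V" unfolding P_def gp_def by auto
    then have "length p \<le> n" unfolding n_def using finV
      by (metis card_mono distinct_card)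
    then show "p \<in> {xs. set xs \<subseteq> V \<and> length xs \<le> n}" using \<open>set p \<subseteq> V\<close> by simp
  qed
  then have Pfin: "finite P" using finite_lists_length_le[OF finV] finite_subset by blast
  have "V \<noteq> {}" using n3 by auto
  then obtain v where "v \<in> V" by blast
  then have vP: "[v] \<in> P" unfolding P_def gp_def by simp
  define L where "L = Max (length ` P)"
  have "L \<in> length ` P" unfolding L_def using Pfin vP by (intro Max_in) auto
  then obtain p where pP: "p \<in> P" and pL: "length p = L" by auto
  have maxL: "\<And>q. q \<in> P \<Longrightarrow> length q \<le> L" unfolding L_def using Pfin by simp
  have "1 \<le> L" using maxL[OF vP] by simp
  then obtain m where Lm: "L = Suc m" by (cases L) auto
  have dp: "distinct p" and sp: "successively (\<lambda>x y. {x,y} \<in> E) p" and pV: "set p \<subseteq> V"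
    using pP unfolding P_def gp_def by auto
  have Ln: "L \<le> n" unfolding n_def using finV pV dp pL by (metis card_mono distinct_card)
  have pne: "p \<noteq> []" using pL Lm by auto
  have hdp: "hd p = p!0" using pne by (simp add: hd_conv_nth)
  have lastp: "last p = p!m" using pne pL Lm by (simp add: last_conv_nth)
  have N0: "nbr E (p!0) \<subseteq> set p"
  proof
    fix x assume x: "x \<in> nbr E (p!0)"
    show "x \<in> set p"
    proof (rule ccontr)
      assume xn: "x \<notin> set p"
      have "{x, p!0} \<in> E" using x unfolding nbr_def by (simp add: insert_commute)
      then have "successively (\<lambda>x y. {x,y} \<in> E) ([x] @ p)"
        using sp pne hdp by (subst successively_append_iff) simp
      moreover have "x \<in> V" using x nbrV by blast
      ultimately have "x # p \<in> P" using xn dp pV unfolding P_def gp_def by simp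
      then have "length (x # p) \<le> L" by (rule maxL)
      then show False using pL by simp
    qed
  qed
  have Nm: "nbr E (p!m) \<subseteq> set p"
  proof
    fix x assume x: "x \<in> nbr E (p!m)"
    show "x \<in> set p"
    proof (rule ccontr)
      assume xn: "x \<notin> set p"
      have "{p!m, x} \<in> E" using x unfolding nbr_def by simp
      then have "successively (\<lambda>x y. {x,y} \<in> E) (p @ [x])"
        using sp pne lastp by (subst successively_append_iff) simp
      moreover have "x \<in> V" using x nbrV by blast
      ultimately have "p @ [x] \<in> P" using xn dp pV unfolding P_def gp_def by simp
      then have "length (p @ [x]) \<le> L" by (rule maxL)
      then show False using pL by simp
    qed
  qed
  define A where "A = {j. j<m \<and> {p!0, p!Suc j}\<in>E}"
  define B where "B = {j. j<m \<and> {p!j, p!m}\<in>E}"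
  have finA: "finite A" and finB: "finite B" unfolding A_def B_def by auto
  have A_sub: "nbr E (p!0) \<subseteq> (\<lambda>j. p!Suc j) ` A"
  proof
    fix x assume x: "x \<in> nbr E (p!0)"
    then have "x \<in> set p" using N0 by blast
    then obtain k where k: "k < L" "p!k = x" using pL by (auto simp: in_set_conv_nth)
    have e: "{p!0, x} \<in> E" using x unfolding nbr_def by simp
    then have "k \<noteq> 0" using edgene[OF e] k by (cases k) auto
    then obtain j where j: "k = Suc j" by (cases k) auto
    then have "j \<in> A" unfolding A_def using k e Lm by auto
    then show "x \<in> (\<lambda>j. p!Suc j) ` A" using j k by blast
  qed
  have B_sub: "nbr E (p!m) \<subseteq> (\<lambda>j. p!j) ` B"
  proof
    fix x assume x: "x \<in> nbr E (p!m)"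
    then have "x \<in> set p" using Nm by blast
    then obtain k where k: "k < L" "p!k = x" using pL by (auto simp: in_set_conv_nth)
    have e: "{p!m, x} \<in> E" using x unfolding nbr_def by simp
    then have "k \<noteq> m" using edgene[OF e] k by (cases "k = m") auto
    then have "k < m" using k Lm by simp
    then have "k \<in> B" unfolding B_def using k e by (auto simp: insert_commute)
    then show "x \<in> (\<lambda>j. p!j) ` B" using k by blast
  qed
  have cA: "card (nbr E (p!0)) \<le> card A"
    using card_mono[OF finite_imageI[OF finA] A_sub] card_image_le[OF finA, of "\<lambda>j. p!Suc j"] by linarith
  have cB: "card (nbr E (p!m)) \<le> card B"
    using card_mono[OF finite_imageI[OF finB] B_sub] card_image_le[OF finB, of "\<lambda>j. p!j"] by linarith
  have p0V: "p!0 \<in> V" and pmV: "p!m \<in> V" using pV pL Lm by auto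
  have d0: "2 * card (nbr E (p!0)) \<ge> n" and dm: "2 * card (nbr E (p!m)) \<ge> n"
    using deg p0V pmV unfolding n_def by auto
  have cAm: "card A \<le> m"
  proof -
    have "A \<subseteq> {..<m}" unfolding A_def by auto
    then show ?thesis by (metis card_lessThan card_mono finite_lessThan)
  qed
  have "A \<inter> B \<noteq> {}"
  proof
    assume dis: "A \<inter> B = {}"
    have "A \<union> B \<subseteq> {..<m}" unfolding A_def B_def by auto
    then have "card (A \<union> B) \<le> m" by (metis card_lessThan card_mono finite_lessThan)
    then have "card A + card B \<le> m" using card_Un_disjoint[OF finA finB dis] by simp
    then show False using cA cB d0 dm Ln Lm by linarith
  qed
  then obtain i where i: "i < m" "{p!0, p!Suc i} \<in> E" "{p!i, p!m} \<in> E"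
    unfolding A_def B_def by blast
  define c where "c = take (Suc i) p @ rev (drop (Suc i) p)"
  have sp2: "successively (\<lambda>x y. {x,y} \<in> E) (take (Suc i) p @ drop (Suc i) p)" using sp by simp
  have st: "successively (\<lambda>x y. {x,y} \<in> E) (take (Suc i) p)"
    and sd: "successively (\<lambda>x y. {x,y} \<in> E) (drop (Suc i) p)"
    using sp2 unfolding successively_append_iff by auto
  have lt: "last (take (Suc i) p) = p!i" using i pL Lm by (subst last_conv_nth) auto
  have hr: "hd (rev (drop (Suc i) p)) = p!m" using i pL Lm lastp
    by (simp add: hd_rev)
  have srd: "successively (\<lambda>x y. {x,y} \<in> E) (rev (drop (Suc i) p))"
    unfolding successively_rev symE by (rule sd)
  have cs: "successively (\<lambda>x y. {x,y} \<in> E) c"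
    unfolding c_def using st srd lt hr i by (subst successively_append_iff) simp
  have cset: "set c = set p"
  proof -
    have "set c = set (take (Suc i) p) \<union> set (drop (Suc i) p)" unfolding c_def by simp
    also have "\<dots> = set (take (Suc i) p @ drop (Suc i) p)" by (simp only: set_append)
    finally show ?thesis by simp
  qed
  have cd: "distinct c"
  proof -
    have "distinct (take (Suc i) p @ drop (Suc i) p)" using dp by simp
    then show ?thesis unfolding c_def distinct_append by simp
  qed
  have lc: "last c = p!Suc i" unfolding c_def using i pL Lm
    by (simp add: last_rev hd_drop_conv_nth)
  have hc: "hd c = p!0" unfolding c_def using i pL Lm pne hdp by simp
  have close: "{last c, hd c} \<in> E" using lc hc i by (simp add: insert_commute)
  have lenc: "length c = L" unfolding c_def using pL i Lm by simp
  show ?thesis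
  proof (rule ccontr)
    assume "\<not> ?thesis"
    then have "set p \<noteq> V" using dp sp unfolding gp_def by blast
    then obtain u where u: "u \<in> V" "u \<notin> set p" using pV by blast
    have du: "2 * card (nbr E u) \<ge> n" using deg u unfolding n_def by auto
    have unu: "u \<notin> nbr E u" using edgene unfolding nbr_def by blast
    have "nbr E u \<inter> set p \<noteq> {}"
    proof
      assume dis: "nbr E u \<inter> set p = {}"
      have "nbr E u \<union> set p \<subseteq> V - {u}" using nbrV unu u pV by blast
      then have "card (nbr E u \<union> set p) \<le> n - 1" unfolding n_def using finV u
        by (metis card_Diff_singleton card_mono finite_Diff)
      moreover have "card (nbr E u \<union> set p) = card (nbr E u) + L"
        using card_Un_disjoint[OF finite_subset[OF nbrV finV] _ dis] distinct_card[OF dp] pL by simp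
      ultimately show False using du d0 cA cAm Lm by linarith
    qed
    then obtain w where w: "w \<in> set c" "{u,w} \<in> E" unfolding nbr_def cset by blast
    then obtain xs ys where xy: "c = xs @ w # ys" by (meson split_list)
    define r where "r = [u] @ (w # ys) @ xs"
    have s1: "successively (\<lambda>x y. {x,y} \<in> E) (w # ys)" and s2: "successively (\<lambda>x y. {x,y} \<in> E) xs"
      using cs unfolding xy successively_append_iff by auto
    have j2: "xs \<noteq> [] \<Longrightarrow> {last (w # ys), hd xs} \<in> E"
      using close unfolding xy by (cases ys) auto
    have s3: "successively (\<lambda>x y. {x,y} \<in> E) ((w # ys) @ xs)"
      unfolding successively_append_iff using s1 s2 j2 by blast
    have sr: "successively (\<lambda>x y. {x,y} \<in> E) r"
      unfolding r_def by (subst successively_append_iff) (use s3 w(2) in simp)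
    have dr: "distinct r" unfolding r_def using cd u(2) cset unfolding xy by auto
    have "set r \<subseteq> V" unfolding r_def using u pV cset unfolding xy by auto
    then have "r \<in> P" using sr dr unfolding P_def gp_def by simp
    moreover have "length r = Suc L" unfolding r_def using lenc unfolding xy by simp
    ultimately show False using maxL[of r] by simp
  qed
qed

lemma idx_unique:
  assumes "distinct p" "Suc i < length p" "Suc j < length p" "{p!i, p!Suc i} = {p!j, p!Suc j}"
  shows "i = j"
  using assms by (auto simp: doubleton_eq_iff nth_eq_iff_index_eq)

lemma closed_rtrancl:
  assumes "(a,b) \<in> R\<^sup>*" "a \<in> L" "\<And>x y. (x,y) \<in> R \<Longrightarrow> x \<in> L \<Longrightarrow> y \<in> L"
  shows "b \<in> L"
  using assms(1) by (induction rule: rtrancl_induct) (use assms in auto)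

lemma adj_rel_conv: "(adj_rel S)\<inverse> = adj_rel S"
  by (auto simp: adj_rel_def insert_commute)

lemma upper:
  assumes sg: "simple_graph V E" and n3: "card V \<ge> 3"
    and p: "gp E p" "set p = V"
  shows "\<exists>c. (\<forall>k. k_proper_coloring V E k c) \<and> card (c ` E) = 2"
proof -
  define n where "n = card V"
  have dp: "distinct p" and sp: "successively (\<lambda>x y. {x,y} \<in> E) p" using p unfolding gp_def by auto
  have ln: "length p = n" unfolding n_def using p distinct_card dp by metis
  have finV: "finite V" using sg simple_graph_def by blast
  define T where "T = {{p!i, p!Suc i} | i. Suc i < n}"
  define c where "c = (\<lambda>e. if \<exists>i. Suc i < n \<and> odd i \<and> e = {p!i, p!Suc i} then 1 else (0::nat))"
  have col: "\<And>i. Suc i < n \<Longrightarrow> c {p!i, p!Suc i} = (if odd i then 1 else 0)"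
  proof -
    fix i assume i: "Suc i < n"
    have "(\<exists>j. Suc j < n \<and> odd j \<and> {p!i, p!Suc i} = {p!j, p!Suc j}) \<longleftrightarrow> odd i"
      using idx_unique[OF dp] i ln by metis
    then show "c {p!i, p!Suc i} = (if odd i then 1 else 0)" unfolding c_def by simp
  qed
  have TE: "T \<subseteq> E" unfolding T_def using successively_nth[OF sp] ln by auto
  have proper: "proper_edges c T"
    unfolding proper_edges_def
  proof (intro ballI impI)
    fix e f assume e: "e \<in> T" and f: "f \<in> T" and ef: "e \<noteq> f \<and> e \<inter> f \<noteq> {}"
    obtain i where i: "Suc i < n" "e = {p!i, p!Suc i}" using e unfolding T_def by blast
    obtain j where j: "Suc j < n" "f = {p!j, p!Suc j}" using f unfolding T_def by blast
    have "i \<noteq> j" using ef i j by blast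
    have eq: "\<And>a b. a < n \<Longrightarrow> b < n \<Longrightarrow> p!a = p!b \<Longrightarrow> a = b"
      using dp ln by (simp add: nth_eq_iff_index_eq)
    have "j = Suc i \<or> i = Suc j"
    proof -
      obtain z where "z \<in> e" "z \<in> f" using ef by blast
      then show ?thesis using i j eq \<open>i \<noteq> j\<close> by (auto dest: eq)
    qed
    then show "c e \<noteq> c f" using col i j by auto
  qed
  have conn: "\<And>a b. a \<le> b \<Longrightarrow> b < n \<Longrightarrow> (p!a, p!b) \<in> (adj_rel T)\<^sup>* \<and> (p!b, p!a) \<in> (adj_rel T)\<^sup>*"
  proof -
    fix a b show "a \<le> b \<Longrightarrow> b < n \<Longrightarrow> (p!a, p!b) \<in> (adj_rel T)\<^sup>* \<and> (p!b, p!a) \<in> (adj_rel T)\<^sup>*"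
    proof (induction b)
      case 0 then show ?case by simp
    next
      case (Suc b)
      show ?case
      proof (cases "a = Suc b")
        case True then show ?thesis by simp
      next
        case False
        then have IH: "(p!a, p!b) \<in> (adj_rel T)\<^sup>* \<and> (p!b, p!a) \<in> (adj_rel T)\<^sup>*" using Suc by simp
        have "{p!b, p!Suc b} \<in> T" using Suc unfolding T_def by blast
        then have "(p!b, p!Suc b) \<in> adj_rel T" "(p!Suc b, p!b) \<in> adj_rel T"
          unfolding adj_rel_def by (auto simp: insert_commute)
        then show ?thesis using IH
          by (meson rtrancl_into_rtrancl converse_rtrancl_into_rtrancl)
      qed
    qed
  qed
  have tree: "is_tree V T"
    unfolding is_tree_def
  proof (intro conjI)
    show "finite V" by fact
    show "V \<noteq> {}" using n3 by auto
    show "\<forall>e\<in>T. e \<subseteq> V \<and> card e = 2"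
    proof
      fix e assume "e \<in> T"
      then obtain i where i: "Suc i < n" "e = {p!i, p!Suc i}" unfolding T_def by blast
      have "p!i \<noteq> p!Suc i" using dp i ln by (simp add: nth_eq_iff_index_eq)
      then show "e \<subseteq> V \<and> card e = 2" using i p(2) ln by auto
    qed
    show "connected_on V T" unfolding connected_on_def
    proof (intro ballI)
      fix x y assume "x \<in> V" "y \<in> V"
      then obtain a b where "a < n" "b < n" "x = p!a" "y = p!b" using p(2) ln by (metis in_set_conv_nth)
      then show "(x,y) \<in> (adj_rel T)\<^sup>*" using conn by (cases "a \<le> b") (auto simp: not_le)
    qed
    show "\<forall>e\<in>T. \<forall>x y. e = {x, y} \<longrightarrow> (x, y) \<notin> (adj_rel (T - {e}))\<^sup>*"
    proof (intro ballI allI impI)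
      fix e x y assume eT: "e \<in> T" and exy: "e = {x,y}"
      obtain i where i: "Suc i < n" "e = {p!i, p!Suc i}" using eT unfolding T_def by blast
      define L where "L = {p!j | j. j \<le> i}"
      have cl: "\<And>a b. (a,b) \<in> adj_rel (T - {e}) \<Longrightarrow> a \<in> L \<Longrightarrow> b \<in> L"
      proof -
        fix a b assume ab: "(a,b) \<in> adj_rel (T - {e})" and aL: "a \<in> L"
        then obtain j where j: "Suc j < n" "{a,b} = {p!j, p!Suc j}" "{a,b} \<noteq> e"
          unfolding adj_rel_def T_def by auto
        have "j \<noteq> i" using j i by blast
        obtain j' where j': "j' \<le> i" "a = p!j'" using aL unfolding L_def by blast
        have eq: "\<And>a b. a < n \<Longrightarrow> b < n \<Longrightarrow> p!a = p!b \<Longrightarrow> a = b"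
          using dp ln by (simp add: nth_eq_iff_index_eq)
        have "(a = p!j \<and> b = p!Suc j) \<or> (a = p!Suc j \<and> b = p!j)" using j(2) by (auto simp: doubleton_eq_iff)
        then show "b \<in> L"
        proof
          assume h: "a = p!j \<and> b = p!Suc j"
          then have "j' = j" using eq j' j i by simp
          then show "b \<in> L" using h j' \<open>j \<noteq> i\<close> unfolding L_def by (intro CollectI exI[of _ "Suc j"]) auto
        next
          assume h: "a = p!Suc j \<and> b = p!j"
          then have "j' = Suc j" using eq j' j i by simp
          then show "b \<in> L" using h j' unfolding L_def by (intro CollectI exI[of _ j]) auto
        qed
      qed
      have notL: "p!Suc i \<notin> L"
      proof
        assume "p!Suc i \<in> L"
        then obtain j where "j \<le> i" "p!Suc i = p!j" unfolding L_def by blast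
        then show False using dp i ln by (simp add: nth_eq_iff_index_eq)
      qed
      have iL: "p!i \<in> L" unfolding L_def by blast
      have no: "(p!i, p!Suc i) \<notin> (adj_rel (T - {e}))\<^sup>*"
        using closed_rtrancl[of "p!i" "p!Suc i" "adj_rel (T - {e})" L] cl notL iL by blast
      have no2: "(p!Suc i, p!i) \<notin> (adj_rel (T - {e}))\<^sup>*"
      proof
        assume "(p!Suc i, p!i) \<in> (adj_rel (T - {e}))\<^sup>*"
        then have "(p!i, p!Suc i) \<in> ((adj_rel (T - {e}))\<^sup>*)\<inverse>" by simp
        then have "(p!i, p!Suc i) \<in> (adj_rel (T - {e}))\<^sup>*"
          by (simp add: rtrancl_converse[symmetric] adj_rel_conv)
        then show False using no by simp
      qed
      have "(x = p!i \<and> y = p!Suc i) \<or> (x = p!Suc i \<and> y = p!i)" using exy i by (auto simp: doubleton_eq_iff)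
      then show "(x, y) \<notin> (adj_rel (T - {e}))\<^sup>*" using no no2 by blast
    qed
  qed
  have kp: "\<forall>k. k_proper_coloring V E k c"
    unfolding k_proper_coloring_def using tree TE proper by blast
  have "c ` E = {0, 1}"
  proof
    show "c ` E \<subseteq> {0,1}" unfolding c_def by auto
    have n12: "Suc 0 < n" "Suc 1 < n" using n3 unfolding n_def by auto
    have "{p!0, p!Suc 0} \<in> T" "{p!1, p!Suc 1} \<in> T" unfolding T_def using n12 by blast+
    then have "{p!0, p!Suc 0} \<in> E" "{p!1, p!Suc 1} \<in> E" using TE by blast+
    moreover have "c {p!0, p!Suc 0} = 0" "c {p!1, p!Suc 1} = 1" using col n3 unfolding n_def by auto
    ultimately show "{0,1} \<subseteq> c ` E" by (metis empty_subsetI image_eqI insert_subset)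
  qed
  then show ?thesis using kp by auto
qed

theorem mainTheorem7:
  fixes V :: "'a set" and E :: "'a set set" and k :: nat
  assumes "simple_graph V E"
    and "card V \<ge> 3"
    and "\<forall>v\<in>V. 2 * degree E v \<ge> card V"
    and "3 \<le> k" and "k \<le> card V"
  shows "px V E k = 2"
proof -
  have deg: "\<forall>v\<in>V. 2 * card (nbr E v) \<ge> card V" using assms(3) degree_nbr[OF assms(1)] by simp
  obtain p where p: "gp E p" "set p = V" using ham_path[OF assms(1,2) deg] by blast
  obtain c where c: "\<forall>k. k_proper_coloring V E k c" "card (c ` E) = 2" using upper[OF assms(1,2) p] by blast
  have finV: "finite V" using assms(1) simple_graph_def by blast
  have finE: "finite E"
  proof -
    have "E \<subseteq> Pow V" using assms(1) unfolding simple_graph_def by blast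
    moreover have "finite (Pow V)" using finV by simp
    ultimately show ?thesis by (rule finite_subset)
  qed
  show ?thesis unfolding px_def
  proof (rule Least_equality)
    show "\<exists>c. k_proper_coloring V E k c \<and> card (c ` E) = 2" using c by blast
  next
    fix m assume "\<exists>c. k_proper_coloring V E k c \<and> card (c ` E) = m"
    then obtain d where d: "k_proper_coloring V E k d" "card (d ` E) = m" by blast
    show "2 \<le> m"
    proof (rule ccontr)
      assume "\<not> 2 \<le> m"
      then have "card (d ` E) \<le> Suc 0" using d by simp
      moreover have "finite (d ` E)" using finE by simp
      ultimately have same: "\<forall>a\<in>d ` E. \<forall>b\<in>d ` E. a = b" using card_le_Suc0_iff_eq by blast
      obtain S where S: "S \<subseteq> V" "card S = k" "finite S" by (rule obtain_subset_with_card_n[OF assms(5)])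
      have "\<exists>W T. W \<subseteq> V \<and> T \<subseteq> E \<and> is_tree W T \<and> S \<subseteq> W \<and> proper_edges d T"
        using d(1) S(1,2) unfolding k_proper_coloring_def by simp
      then obtain W T where WT: "W \<subseteq> V" "T \<subseteq> E" "is_tree W T" "S \<subseteq> W" "proper_edges d T"
        by blast
      have "finite W" using WT(3) unfolding is_tree_def by blast
      then have "card W \<ge> 3" using card_mono[OF _ WT(4)] S assms(4) by linarith
      moreover have "\<forall>e\<in>T. \<forall>f\<in>T. e \<noteq> f \<longrightarrow> e \<inter> f = {}"
      proof (intro ballI impI)
        fix e f assume "e \<in> T" "f \<in> T" "e \<noteq> f"
        have "d e \<in> d ` E" "d f \<in> d ` E" using \<open>e \<in> T\<close> \<open>f \<in> T\<close> WT(2) by auto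
        then have "d e = d f" using same by blast
        moreover have "e \<noteq> f \<and> e \<inter> f \<noteq> {} \<longrightarrow> d e \<noteq> d f"
          using WT(5) \<open>e \<in> T\<close> \<open>f \<in> T\<close> unfolding proper_edges_def by blast
        ultimately show "e \<inter> f = {}" using \<open>e \<noteq> f\<close> by blast
      qed
      ultimately show False by (rule no_small_tree[OF WT(3)])
    qed
  qed
qed

end
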